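(* For real $x>0$ let \[ S(x)=\int_0^\infty\frac{2\arctan(t/x)}{e^{2\pi t}-1}\,dt. \] Let $p\in(1,\infty)\setminus\{2\}$ and $\frac1p+\frac1{p'}=1$. Then for every $k\in\mathbb N$, \[ S(k)-\frac1pS(kp/2)-\frac1{p'}S(kp'/2)<0, \] and $\lim_{k\to\infty}\left(S(k)-\frac1pS(kp/2)-\frac1{p'}S(kp'/2)\right)=0$. *)

theory Defs
  imports "HOL-Analysis.Analysis"
begin

text \<open>Binet-type integral S(x) = int_0^infty 2 arctan(t/x) / (e^(2 pi t) - 1) dt,
  taken as a Lebesgue integral over (0, infty) (integrand is nonnegative and integrable for x > 0).\<close>
definition S :: "real \<Rightarrow> real" where
  "S x = (LBINT t:{0<..}. 2 * arctan (t / x) / (exp (2 * pi * t) - 1))"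

end

theory Submission
  imports Defs "HOL-Probability.Sinc_Integral"
begin

lemma aux1: "(w::real) \<noteq> 0 \<Longrightarrow> a*inverse w - inverse w*(2*(a*(a*z)))*inverse w*(a*z) = (a*w - a*z*(2*(a*z)*a)) * (inverse w * inverse w)"
  by (simp add: field_simps)

lemma dderiv:
  fixes a z :: real
  shows "((\<lambda>z. arctan (a*z) + a*z/(1+(a*z)^2)) has_real_derivative
        (2*a/(1+(a*z)^2)^2)) (at z)"
proof -
    have pos: "1+(a*z)^2 \<noteq> 0" by (smt (verit) zero_le_power2)
    have e: "a/(1+(a*z)^2) + (a*(1+(a*z)^2) - a*z*(2*(a*z)*a))/((1+(a*z)^2)*(1+(a*z)^2)) = 2*a/(1+(a*z)^2)^2"
      using pos by (simp add: divide_simps) (simp add: power2_eq_square algebra_simps)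
    have "((\<lambda>z. arctan (a*z) + a*z/(1+(a*z)^2)) has_real_derivative
        (a/(1+(a*z)^2) + (a*(1+(a*z)^2) - a*z*(2*(a*z)*a))/((1+(a*z)^2)*(1+(a*z)^2)))) (at z)"
      using pos apply (auto intro!: derivative_eq_intros simp: divide_inverse)
      apply (rule aux1[OF pos])
      done
    then show ?thesis using e by simp
qed

lemma d_mono:
  fixes a x y :: real
  assumes "a > 0" "x < y"
  shows "arctan (a*x) + a*x/(1+(a*x)^2) < arctan (a*y) + a*y/(1+(a*y)^2)"
proof -
  have "\<exists>D. ((\<lambda>z. arctan (a*z) + a*z/(1+(a*z)^2)) has_real_derivative D) (at z) \<and> D > 0" for z
  proof (intro exI conjI)
    show "((\<lambda>z. arctan (a*z) + a*z/(1+(a*z)^2)) has_real_derivative (2*a/(1+(a*z)^2)^2)) (at z)"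
      by (rule dderiv)
    have "1+(a*z)^2 > 0" by (smt (verit) zero_le_power2)
    then show "2*a/(1+(a*z)^2)^2 > 0" using assms by simp
  qed
  then show ?thesis using DERIV_pos_imp_increasing[OF assms(2)] by blast
qed

lemma psi_deriv:
  fixes a r :: real
  shows "((\<lambda>r. r * arctan (a*r) + (1-r) * arctan (a*(1-r))) has_real_derivative
     ((arctan (a*r) + a*r/(1+(a*r)^2)) - (arctan (a*(1-r)) + a*(1-r)/(1+(a*(1-r))^2)))) (at r)"
proof -
  have p1: "1+(a*r)^2 \<noteq> 0" by (smt (verit) zero_le_power2)
  have p2: "1+(a*(1-r))^2 \<noteq> 0" by (smt (verit) zero_le_power2)
  show ?thesis
    using p1 p2 by (auto intro!: derivative_eq_intros simp: divide_inverse)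
qed

lemma key:
  fixes a q :: real
  assumes "a > 0" "q \<noteq> 1/2"
  shows "arctan (a/2) < q * arctan (a*q) + (1-q) * arctan (a*(1-q))"
proof -
  define psi where "psi = (\<lambda>r::real. r * arctan (a*r) + (1-r) * arctan (a*(1-r)))"
  have half: "psi (1/2) = arctan (a/2)" unfolding psi_def by simp
  have sym: "psi (1 - r) = psi r" for r unfolding psi_def by simp
  have gt: "psi (1/2) < psi r" if "r > 1/2" for r
  proof (rule DERIV_pos_imp_increasing_open[OF that])
    fix x assume x: "1/2 < x" "x < r"
    show "\<exists>y. DERIV psi x :> y \<and> y > 0"
      unfolding psi_def
      using psi_deriv[of a x] d_mono[OF assms(1), of "1-x" x] x by auto
  next
    show "continuous_on {1/2..r} psi"
      unfolding psi_def by (intro continuous_intros)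
  qed
  show ?thesis
  proof (cases "q > 1/2")
    case True then show ?thesis using gt[of q] half unfolding psi_def by simp
  next
    case False
    then have "1 - q > 1/2" using assms(2) by auto
    then have "psi (1/2) < psi (1-q)" by (rule gt)
    then show ?thesis using half sym[of q] unfolding psi_def by simp
  qed
qed


definition Fi :: "real \<Rightarrow> real \<Rightarrow> real" where
  "Fi x t = 2 * arctan (t / x) / (exp (2 * pi * t) - 1)"

lemma S_Fi: "S x = (LBINT t:{0<..}. Fi x t)"
  unfolding S_def Fi_def by simp

lemma exp_bound:
  fixes t :: real assumes "t > 0"
  shows "t / (exp (2*pi*t) - 1) \<le> exp (-(t*pi))"
proof -
  define z where "z = exp (pi*t)"
  have z1: "z \<ge> 1 + pi*t" unfolding z_def by (rule exp_ge_add_one_self)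
  have pt: "pi*t > 0" using assms by simp
  have zz: "exp (2*pi*t) = z*z" unfolding z_def by (simp add: exp_add[symmetric])
  have zpos: "z > 0" unfolding z_def by simp
  have m: "(z-1)*(z+1) \<ge> pi*t*(z+1)" using z1 zpos by (intro mult_right_mono) auto
  have "pi*t*(z+1) \<ge> pi*t*z" using pt by (simp add: distrib_left)
  then have "z*z - 1 \<ge> pi*t*z" using m by (simp add: algebra_simps)
  moreover have "(pi-1)*(t*z) > 0" using pi_gt3 assms zpos by (intro mult_pos_pos) auto
  ultimately have "z*z - 1 \<ge> t*z" by (simp add: algebra_simps)
  moreover have tz: "t*z > 0" using assms zpos by simp
  ultimately have "z*z-1 > 0" by simp
  then have "t / (z*z - 1) \<le> t / (t*z)"
    using assms tz \<open>z*z - 1 \<ge> t*z\<close> by (intro divide_left_mono) auto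
  also have "\<dots> = exp (-(t*pi))" using assms unfolding z_def by (simp add: exp_minus field_simps)
  finally show ?thesis using zz by simp
qed

lemma Fi_bound:
  fixes x t :: real assumes "x > 0" "t > 0"
  shows "0 \<le> Fi x t" "Fi x t \<le> (2/x) * exp (-(t*pi))"
proof -
  have E: "exp (2*pi*t) - 1 > 0" using assms by simp
  show "0 \<le> Fi x t" unfolding Fi_def using assms E by simp
  have at: "arctan (t/x) \<le> t/x"
  proof -
    have "\<And>y. 0 \<le> y \<Longrightarrow> y \<le> t/x \<Longrightarrow> \<exists>D. ((\<lambda>y. y - arctan y) has_real_derivative D) (at y) \<and> D \<ge> 0"
    proof -
      fix y :: real
      have "((\<lambda>y. y - arctan y) has_real_derivative (1 - inverse (1 + y^2))) (at y)"
        by (auto intro!: derivative_eq_intros)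
      moreover have "1 - inverse (1 + y^2) \<ge> 0"
        by (smt (verit) inverse_le_1_iff zero_le_power2)
      ultimately show "\<exists>D. ((\<lambda>y. y - arctan y) has_real_derivative D) (at y) \<and> D \<ge> 0" by blast
    qed
    from DERIV_nonneg_imp_nondecreasing[of 0 "t/x", OF _ this] assms show ?thesis by simp
  qed
  have "Fi x t \<le> 2 * (t/x) / (exp (2*pi*t) - 1)"
    unfolding Fi_def by (intro divide_right_mono mult_left_mono) (use E at in auto)
  also have "\<dots> = (2/x) * (t / (exp (2*pi*t) - 1))" by simp
  also have "\<dots> \<le> (2/x) * exp (-(t*pi))"
    using exp_bound[OF assms(2)] assms by (intro mult_left_mono) auto
  finally show "Fi x t \<le> (2/x) * exp (-(t*pi))" .
qed

lemma exp_int: "set_integrable lborel {0<..} (\<lambda>t. exp (-(t*pi)))"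
  by (rule integrable_I0i_exp_mscale) simp

lemma Fi_meas: "set_borel_measurable lborel {0<..} (Fi x)"
  unfolding set_borel_measurable_def Fi_def by measurable

lemma Fi_int:
  assumes "x > 0" shows "set_integrable lborel {0<..} (Fi x)"
proof (rule set_integrable_bound[OF _ Fi_meas])
  show "set_integrable lborel {0<..} (\<lambda>t. (2/x) * exp (-(t*pi)))"
    using exp_int by simp
  show "AE t in lborel. t \<in> {0<..} \<longrightarrow> norm (Fi x t) \<le> norm ((2/x) * exp (-(t*pi)))"
    using Fi_bound[OF assms] assms by (auto intro!: AE_I2)
qed

definition Ei :: real where "Ei = (LBINT t:{0<..}. exp (-(t*pi)))"

lemma S_bound:
  assumes "x > 0" shows "0 \<le> S x" "S x \<le> (2/x) * Ei"
proof -
  show "0 \<le> S x" unfolding S_Fi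
    using set_integral_mono[of lborel "{0<..}" "\<lambda>_. 0" "Fi x"] Fi_int[OF assms] Fi_bound[OF assms]
    by (simp add: set_integrable_def)
  have "S x \<le> (LBINT t:{0<..}. (2/x) * exp (-(t*pi)))" unfolding S_Fi
    using set_integral_mono[of lborel "{0<..}" "Fi x" "\<lambda>t. (2/x) * exp (-(t*pi))"] Fi_int[OF assms] Fi_bound[OF assms] exp_int
    by simp
  then show "S x \<le> (2/x) * Ei" unfolding Ei_def by simp
qed

lemma S_lim:
  assumes "c > 0" shows "(\<lambda>k::nat. S (real k * c)) \<longlonglongrightarrow> 0"
proof (rule tendsto_sandwich[of "\<lambda>_. 0" _ _ "\<lambda>k. (2/c*Ei) * inverse (real k)"])
  show "\<forall>\<^sub>F n in sequentially. 0 \<le> S (real n * c)"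
    using eventually_gt_at_top[of 0] by eventually_elim (use S_bound assms in auto)
  show "\<forall>\<^sub>F n in sequentially. S (real n * c) \<le> (2/c*Ei) * inverse (real n)"
  proof (intro eventually_sequentiallyI)
    fix n :: nat assume n: "n \<ge> 1"
    have "S (real n * c) \<le> 2/(real n * c)*Ei" using S_bound(2)[of "real n * c"] n assms by simp
    also have "2/(real n * c)*Ei = (2/c*Ei) * inverse (real n)" by (simp add: field_simps)
    finally show "S (real n * c) \<le> (2/c*Ei) * inverse (real n)" .
  qed
  show "(\<lambda>_. 0) \<longlonglongrightarrow> (0::real)" by simp
  show "(\<lambda>k. (2/c*Ei) * inverse (real k)) \<longlonglongrightarrow> 0"
    by (rule tendsto_mult_right_zero[OF tendsto_inverse_0_at_top[OF filterlim_real_sequentially]])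
qed

lemma neg_int:
  fixes h :: "real \<Rightarrow> real"
  assumes int: "set_integrable lborel {0<..} h" and neg: "\<And>t. t > 0 \<Longrightarrow> h t < 0"
  shows "(LBINT t:{0<..}. h t) < 0"
proof (rule ccontr)
  assume "\<not> ?thesis"
  then have ge: "(LBINT t:{0<..}. h t) \<ge> 0" by simp
  define g where "g t = indicator {0<..} t * (- h t)" for t
  have gi: "integrable lborel g" using int unfolding g_def set_integrable_def
    by (simp add: integrable_minus)
  have gnn: "AE t in lborel. 0 \<le> g t" using neg unfolding g_def
    by (auto intro!: AE_I2 split: split_indicator simp: less_imp_le)
  have "integral\<^sup>L lborel g = - (LBINT t:{0<..}. h t)"
    unfolding g_def set_lebesgue_integral_def by simp
  moreover have "integral\<^sup>L lborel g \<ge> 0" by (rule integral_nonneg_AE[OF gnn])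
  ultimately have "integral\<^sup>L lborel g = 0" using ge by simp
  then have "AE t in lborel. g t = 0" using integral_nonneg_eq_0_iff_AE[OF gi gnn] by simp
  then have "AE t in lborel. t \<notin> {0<..1::real}"
    by eventually_elim (force simp: g_def split: split_indicator dest: neg)
  then have "emeasure lborel {0<..1::real} = 0"
    by (subst (asm) AE_iff_measurable[of "{0<..1}"]) auto
  then show False by simp
qed

theorem proposition3p1:
  fixes p p' :: real
  assumes "p > 1" and "p \<noteq> 2" and "1 / p + 1 / p' = 1"
  shows "(\<forall>k::nat. k \<ge> 1 \<longrightarrow>
            S (real k) - (1 / p) * S (real k * p / 2) - (1 / p') * S (real k * p' / 2) < 0)
       \<and> ((\<lambda>k::nat. S (real k) - (1 / p) * S (real k * p / 2) - (1 / p') * S (real k * p' / 2))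
            \<longlonglongrightarrow> 0)"
proof
  define q where "q = 1/p"
  have q': "1/p' = 1 - q" using assms(3) unfolding q_def by simp
  have qh: "q \<noteq> 1/2" using assms(1,2) unfolding q_def by (auto simp: field_simps)
  have qpos: "0 < q" "q < 1" using assms(1) unfolding q_def by auto
  have pp: "p' > 0"
  proof -
    have "1/p' > 0" using q' qpos by simp
    then show ?thesis by simp
  qed
  have "p' = 1/(1/p')" by simp
  then have pp': "p' = 1/(1-q)" using q' by simp
  show "\<forall>k::nat. k \<ge> 1 \<longrightarrow>
            S (real k) - (1 / p) * S (real k * p / 2) - (1 / p') * S (real k * p' / 2) < 0"
  proof (intro allI impI)
    fix k :: nat assume k: "k \<ge> 1"
    define x where "x = real k"
    have x: "x > 0" using k unfolding x_def by simp
    have x1: "x*p/2 > 0" "x*p'/2 > 0" using x assms(1) pp by auto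
    have I1: "set_integrable lborel {0<..} (Fi x)" by (rule Fi_int[OF x])
    have I2: "set_integrable lborel {0<..} (\<lambda>t. (1/p) * Fi (x*p/2) t)" using Fi_int[OF x1(1)] by simp
    have I3: "set_integrable lborel {0<..} (\<lambda>t. (1/p') * Fi (x*p'/2) t)" using Fi_int[OF x1(2)] by simp
    have "S x - (1 / p) * S (x * p / 2) - (1 / p') * S (x * p' / 2) =
        (LBINT t:{0<..}. Fi x t - (1/p) * Fi (x*p/2) t - (1/p') * Fi (x*p'/2) t)"
      unfolding S_Fi using I1 I2 I3 by (simp add: set_integral_diff)
    also have "\<dots> < 0"
    proof (rule neg_int)
      show "set_integrable lborel {0<..} (\<lambda>t. Fi x t - (1/p) * Fi (x*p/2) t - (1/p') * Fi (x*p'/2) t)"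
        using I1 I2 I3 by (intro set_integral_diff) auto
      fix t :: real assume t: "t > 0"
      define a where "a = 2*t/x"
      have a: "a > 0" using t x unfolding a_def by simp
      have E: "exp (2*pi*t) - 1 > 0" using t by simp
      have e1: "t/x = a/2" unfolding a_def by simp
      have e2: "t/(x*p/2) = a*q" unfolding a_def q_def using x assms(1) by (simp add: field_simps)
      have "t/(x*p'/2) = a*(1/p')" unfolding a_def using x pp by (simp add: field_simps)
      then have e3: "t/(x*p'/2) = a*(1-q)" using q' by simp
      have "Fi x t - (1/p) * Fi (x*p/2) t - (1/p') * Fi (x*p'/2) t
          = 2 / (exp (2*pi*t) - 1) * (arctan (a/2) - (q * arctan (a*q) + (1-q) * arctan (a*(1-q))))"
      proof -
        define E' where "E' = exp (2*pi*t) - 1"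
        have Fe: "Fi y t = 2*arctan (t/y)/E'" for y unfolding Fi_def E'_def by simp
        have "E' > 0" using E unfolding E'_def .
        then show ?thesis unfolding Fe q' e1 e2 e3 q_def[symmetric] E'_def[symmetric]
          by (simp add: field_simps)
      qed
      also have "\<dots> < 0" by (rule mult_pos_neg) (use key[OF a qh] E in auto)
      finally show "Fi x t - (1/p) * Fi (x*p/2) t - (1/p') * Fi (x*p'/2) t < 0" .
    qed
    finally show "S (real k) - (1 / p) * S (real k * p / 2) - (1 / p') * S (real k * p' / 2) < 0"
      unfolding x_def .
  qed
  have L1: "(\<lambda>k::nat. S (real k * 1)) \<longlonglongrightarrow> 0" by (rule S_lim) simp
  have L2: "(\<lambda>k::nat. S (real k * (p/2))) \<longlonglongrightarrow> 0" by (rule S_lim) (use assms(1) in simp)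
  have L3: "(\<lambda>k::nat. S (real k * (p'/2))) \<longlonglongrightarrow> 0" by (rule S_lim) (use pp in simp)
  have "(\<lambda>k::nat. S (real k * 1) - (1 / p) * S (real k * (p/2)) - (1 / p') * S (real k * (p'/2)))
     \<longlonglongrightarrow> 0 - (1/p) * 0 - (1/p') * 0"
    by (intro tendsto_intros L1 L2 L3)
  then show "(\<lambda>k::nat. S (real k) - (1 / p) * S (real k * p / 2) - (1 / p') * S (real k * p' / 2))
            \<longlonglongrightarrow> 0" by (simp add: mult.assoc)
qed

end
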